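(* Let $K$ be a field, $s\ge2$, $S=K[t_1,\ldots,t_s]$ with each $t_i$ of degree $1$, and let $\mathcal{L}\subset\mathbb{Z}^s$ be a homogeneous lattice of rank $s-1$ generated as a $\mathbb{Z}$-module by the rows of an integral matrix $A$. Then $\deg S/I(\mathcal{L})=d_1\cdots d_{s-1}$, where $d_1,\ldots,d_{s-1}$ are the invariant factors of $A$.
   Context: A lattice is a subgroup of $\mathbb{Z}^s$; it is homogeneous if $\sum_ia_i=0$ for all $a\in\mathcal{L}$. For $a\in\mathbb{Z}^s$ write $a=a^+-a^-$ with $a^+,a^-\in\mathbb{N}^s$ of disjoint supports; $I(\mathcal{L})=(\{t^{a^+}-t^{a^-}:a\in\mathcal{L}\})$. The invariant factors of $A$ are the positive diagonal entries $d_1\mid d_2\mid\cdots$ of its Smith normal form. For a graded ideal $I$, with Hilbert function $H_I(d)=\dim_K S_d/I_d$ and Hilbert polynomial $h_I(t)=c_kt^k+\cdots$ (agreeing with $H_I(d)$ for $d\gg0$; $k=-1$ meaning $h_I=0$), $\deg S/I=c_k\,k!$ if $k\ge0$ and $\dim_K S/I$ if $k=-1$. *)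

theory Defs
  imports Main "HOL-Library.Poly_Mapping" "HOL-Computational_Algebra.Polynomial"
begin

text \<open>Monomials are exponent vectors (nat =>0 nat); polynomials are finitely supported
  maps from monomials to coefficients in the field K, with the convolution product of
  Poly_Mapping.  Variables are indexed 0..s-1 instead of 1..s.\<close>

type_synonym 'k mpoly = "(nat \<Rightarrow>\<^sub>0 nat) \<Rightarrow>\<^sub>0 'k"

definition tdeg :: "(nat \<Rightarrow>\<^sub>0 nat) \<Rightarrow> nat" where
  "tdeg e = (\<Sum>j\<in>Poly_Mapping.keys e. Poly_Mapping.lookup e j)"

definition monomials_in :: "nat \<Rightarrow> (nat \<Rightarrow>\<^sub>0 nat) set" where
  "monomials_in s = {e. Poly_Mapping.keys e \<subseteq> {..<s}}"

definition polys :: "nat \<Rightarrow> 'k::field mpoly set" where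
  "polys s = {p. Poly_Mapping.keys p \<subseteq> monomials_in s}"

definition polys_deg :: "nat \<Rightarrow> nat \<Rightarrow> 'k::field mpoly set" where
  "polys_deg s d = {p. Poly_Mapping.keys p \<subseteq> {e \<in> monomials_in s. tdeg e = d}}"

definition smult_mp :: "'k::field \<Rightarrow> 'k mpoly \<Rightarrow> 'k mpoly" where
  "smult_mp c p = Poly_Mapping.single 0 c * p"

definition monomial :: "(nat \<Rightarrow>\<^sub>0 nat) \<Rightarrow> 'k::field mpoly" where
  "monomial e = Poly_Mapping.single e 1"

definition gen_ideal :: "nat \<Rightarrow> 'k::field mpoly set \<Rightarrow> 'k mpoly set" where
  "gen_ideal s G = {p. \<exists>(n::nat) q g. (\<forall>i<n. q i \<in> polys s \<and> g i \<in> G) \<and> p = (\<Sum>i<n. q i * g i)}"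

text \<open>H_I(d) = dim_K S_d / I_d: the maximal size of a finite family in S_d that is
  K-linearly independent modulo I.\<close>
definition hilbert_fun :: "nat \<Rightarrow> 'k::field mpoly set \<Rightarrow> nat \<Rightarrow> nat" where
  "hilbert_fun s I d = Max {card B | B. finite B \<and> B \<subseteq> polys_deg s d \<and>
      (\<forall>c. (\<Sum>b\<in>B. smult_mp (c b) b) \<in> I \<longrightarrow> (\<forall>b\<in>B. c b = 0))}"

definition hilbert_poly :: "nat \<Rightarrow> 'k::field mpoly set \<Rightarrow> rat poly" where
  "hilbert_poly s I = (THE h. eventually (\<lambda>d. of_nat (hilbert_fun s I d) = poly h (of_nat d)) sequentially)"

definition deg_quot :: "nat \<Rightarrow> 'k::field mpoly set \<Rightarrow> rat" where
  "deg_quot s I = (let h = hilbert_poly s I in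
     if h = 0 then of_nat (\<Sum>d\<in>{d. hilbert_fun s I d \<noteq> 0}. hilbert_fun s I d)
     else lead_coeff h * fact (Polynomial.degree h))"

text \<open>Vectors of Z^s are functions nat => int, only indices < s being relevant.
  An m x s integer matrix is a function nat => nat => int (row, column).\<close>

definition row_lattice :: "nat \<Rightarrow> nat \<Rightarrow> (nat \<Rightarrow> nat \<Rightarrow> int) \<Rightarrow> (nat \<Rightarrow> int) set" where
  "row_lattice m s A = {v. \<exists>c::nat \<Rightarrow> int. \<forall>j. v j = (if j < s then (\<Sum>i<m. c i * A i j) else 0)}"

definition homogeneous_lattice :: "nat \<Rightarrow> (nat \<Rightarrow> int) set \<Rightarrow> bool" where
  "homogeneous_lattice s L \<longleftrightarrow> (\<forall>a\<in>L. (\<Sum>j<s. a j) = 0)"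

definition lattice_rank :: "(nat \<Rightarrow> int) set \<Rightarrow> nat" where
  "lattice_rank L = Max {card B | B. finite B \<and> B \<subseteq> L \<and>
      (\<forall>c::(nat \<Rightarrow> int) \<Rightarrow> int. (\<forall>j. (\<Sum>b\<in>B. c b * b j) = 0) \<longrightarrow> (\<forall>b\<in>B. c b = 0))}"

definition pos_part :: "nat \<Rightarrow> (nat \<Rightarrow> int) \<Rightarrow> (nat \<Rightarrow>\<^sub>0 nat)" where
  "pos_part s a = Abs_poly_mapping (\<lambda>j. if j < s then nat (a j) else 0)"

definition neg_part :: "nat \<Rightarrow> (nat \<Rightarrow> int) \<Rightarrow> (nat \<Rightarrow>\<^sub>0 nat)" where
  "neg_part s a = Abs_poly_mapping (\<lambda>j. if j < s then nat (- a j) else 0)"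

definition lattice_ideal :: "nat \<Rightarrow> (nat \<Rightarrow> int) set \<Rightarrow> 'k::field mpoly set" where
  "lattice_ideal s L = gen_ideal s {monomial (pos_part s a) - monomial (neg_part s a) | a. a \<in> L}"

definition mat_mul :: "nat \<Rightarrow> (nat \<Rightarrow> nat \<Rightarrow> int) \<Rightarrow> (nat \<Rightarrow> nat \<Rightarrow> int) \<Rightarrow> nat \<Rightarrow> nat \<Rightarrow> int" where
  "mat_mul n X Y = (\<lambda>i j. \<Sum>k<n. X i k * Y k j)"

definition unimodular :: "nat \<Rightarrow> (nat \<Rightarrow> nat \<Rightarrow> int) \<Rightarrow> bool" where
  "unimodular n X \<longleftrightarrow> (\<exists>Y. \<forall>i<n. \<forall>j<n.
      mat_mul n X Y i j = (if i = j then 1 else 0) \<and> mat_mul n Y X i j = (if i = j then 1 else 0))"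

definition smith_nf :: "nat \<Rightarrow> nat \<Rightarrow> (nat \<Rightarrow> nat \<Rightarrow> int) \<Rightarrow> (nat \<Rightarrow> nat \<Rightarrow> int) \<Rightarrow> bool" where
  "smith_nf m s A D \<longleftrightarrow>
     (\<exists>P Q. unimodular m P \<and> unimodular s Q \<and>
        (\<forall>i<m. \<forall>j<s. D i j = mat_mul s (mat_mul m P A) Q i j)) \<and>
     (\<forall>i<m. \<forall>j<s. i \<noteq> j \<longrightarrow> D i j = 0) \<and>
     (\<forall>i<min m s. D i i \<ge> 0) \<and>
     (\<forall>i. i + 1 < min m s \<longrightarrow> D i i dvd D (i + 1) (i + 1))"

text \<open>Product of the invariant factors (the positive diagonal entries of a Smith normal form).\<close>
definition invariant_factor_prod :: "nat \<Rightarrow> nat \<Rightarrow> (nat \<Rightarrow> nat \<Rightarrow> int) \<Rightarrow> int" where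
  "invariant_factor_prod m s D = (\<Prod>i\<in>{i. i < min m s \<and> D i i > 0}. D i i)"

end

theory Submission
  imports Defs "HOL-Library.FuncSet"
begin


lemma dep_lemma:
  fixes f :: "'b \<Rightarrow> 'j \<Rightarrow> 'a::idom"
  assumes "finite J" "finite B" "card B > card J"
  shows "\<exists>c. (\<forall>j\<in>J. (\<Sum>b\<in>B. c b * f b j) = 0) \<and> (\<exists>b\<in>B. c b \<noteq> 0)"
  using assms
proof (induction J arbitrary: B f rule: finite_induct)
  case empty
  then have "B \<noteq> {}" by auto
  then show ?case by (intro exI[of _ "\<lambda>_. 1"]) auto
next
  case (insert j0 J B f)
  show ?case
  proof (cases "\<forall>b\<in>B. f b j0 = 0")
    case True
    from insert have "card B > card J" by simp
    from insert.IH[OF insert.prems(1) this] obtain c where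
      c: "\<forall>j\<in>J. (\<Sum>b\<in>B. c b * f b j) = 0" "\<exists>b\<in>B. c b \<noteq> 0" by blast
    show ?thesis using c True by (intro exI[of _ c]) auto
  next
    case False
    then obtain b0 where b0: "b0 \<in> B" "f b0 j0 \<noteq> 0" by blast
    define \<alpha> where "\<alpha> = f b0 j0"
    define B' where "B' = B - {b0}"
    define g where "g b j = \<alpha> * f b j - f b j0 * f b0 j" for b j
    have fB': "finite B'" using insert B'_def by simp
    have cB': "card B' > card J" using insert b0 B'_def by (simp add: card_Diff_singleton)
    from insert.IH[OF fB' cB', of g] obtain c' where
      c': "\<forall>j\<in>J. (\<Sum>b\<in>B'. c' b * g b j) = 0" "\<exists>b\<in>B'. c' b \<noteq> 0" by blast
    define c where "c b = (if b = b0 then - (\<Sum>b\<in>B'. c' b * f b j0) else c' b * \<alpha>)" for b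
    have key: "(\<Sum>b\<in>B. c b * f b j) = (\<Sum>b\<in>B'. c' b * g b j)" for j
    proof -
      have "(\<Sum>b\<in>B. c b * f b j) = c b0 * f b0 j + (\<Sum>b\<in>B'. c b * f b j)"
        using b0 insert(4) B'_def by (simp add: sum.remove)
      also have "(\<Sum>b\<in>B'. c b * f b j) = (\<Sum>b\<in>B'. c' b * \<alpha> * f b j)"
        by (rule sum.cong) (auto simp: c_def B'_def)
      also have "c b0 * f b0 j = - (\<Sum>b\<in>B'. c' b * f b j0 * f b0 j)"
        by (simp add: c_def sum_distrib_right)
      finally show ?thesis
        by (simp add: g_def sum_subtractf sum_distrib_left algebra_simps)
    qed
    show ?thesis
    proof (intro exI[of _ c] conjI)
      show "\<forall>j\<in>insert j0 J. (\<Sum>b\<in>B. c b * f b j) = 0"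
        using c'(1) by (auto simp: key g_def \<alpha>_def mult.commute)
      from c'(2) obtain b1 where "b1 \<in> B'" "c' b1 \<noteq> 0" by blast
      then show "\<exists>b\<in>B. c b \<noteq> 0" using b0 \<alpha>_def
        by (intro bexI[of _ b1]) (auto simp: c_def B'_def)
    qed
  qed
qed



lemma Sum_any_when_conj: "(\<Sum>x. (c::'a::comm_monoid_add) when x = a \<and> P x) = (c when P a)"
proof -
  have "(\<Sum>x. c when x = a \<and> P x) = (\<Sum>x. (c when P a) when x = a)"
    by (intro Sum_any.cong) (auto simp: when_def)
  also have "\<dots> = (c when P a)" by simp
  finally show ?thesis .
qed

lemma lookup_mult_single_shift:
  fixes q :: "'k::field mpoly"
  shows "Poly_Mapping.lookup (q * Poly_Mapping.single a 1) (l + a) = Poly_Mapping.lookup q l"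
proof -
  have "Poly_Mapping.lookup (q * Poly_Mapping.single a 1) (l + a) =
        (\<Sum>l'. Poly_Mapping.lookup q l' * (\<Sum>x. Poly_Mapping.lookup (Poly_Mapping.single a 1) x when l + a = l' + x))"
    by (rule Poly_Mapping.lookup_mult)
  also have "\<dots> = (\<Sum>l'. Poly_Mapping.lookup q l' * (1 when l + a = l' + a))"
    by (simp add: lookup_single when_when conj_commute eq_commute[of a] Sum_any_when_conj)
  also have "\<dots> = (\<Sum>l'. Poly_Mapping.lookup q l' when l' = l)"
    by (intro Sum_any.cong) (auto simp: when_def)
  also have "\<dots> = Poly_Mapping.lookup q l" by simp
  finally show ?thesis .
qed

lemma lookup_mult_single_zero:
  fixes q :: "'k::field mpoly"
  assumes "\<forall>l. e \<noteq> l + a"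
  shows "Poly_Mapping.lookup (q * Poly_Mapping.single a 1) e = 0"
proof -
  have "Poly_Mapping.lookup (q * Poly_Mapping.single a 1) e =
        (\<Sum>l'. Poly_Mapping.lookup q l' * (\<Sum>x. Poly_Mapping.lookup (Poly_Mapping.single a 1) x when e = l' + x))"
    by (rule Poly_Mapping.lookup_mult)
  also have "\<dots> = (\<Sum>l'. Poly_Mapping.lookup q l' * (1 when e = l' + a))"
    by (simp add: lookup_single when_when conj_commute eq_commute[of a] Sum_any_when_conj)
  also have "\<dots> = 0" using assms by (simp add: when_def)
  finally show ?thesis .
qed

lemma lookup_smult_mp: "Poly_Mapping.lookup (smult_mp c p) e = c * Poly_Mapping.lookup p e"
proof -
  have "Poly_Mapping.lookup (smult_mp c p) e = (\<Sum>l. Poly_Mapping.lookup (Poly_Mapping.single 0 c) l * (\<Sum>q. Poly_Mapping.lookup p q when e = l + q))"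
    unfolding smult_mp_def by (rule Poly_Mapping.lookup_mult)
  also have "\<dots> = (\<Sum>l. (c * (\<Sum>q. Poly_Mapping.lookup p q when e = l + q)) when l = 0)"
    by (intro Sum_any.cong) (auto simp: lookup_single when_def)
  also have "\<dots> = c * (\<Sum>q. Poly_Mapping.lookup p q when e = q)" by simp
  also have "\<dots> = c * Poly_Mapping.lookup p e" by (simp add: eq_commute[of e])
  finally show ?thesis .
qed



definition Md :: "nat \<Rightarrow> nat \<Rightarrow> (nat \<Rightarrow>\<^sub>0 nat) set" where
  "Md s d = {e \<in> monomials_in s. tdeg e = d}"

definition vec :: "(nat \<Rightarrow>\<^sub>0 nat) \<Rightarrow> nat \<Rightarrow> int" where
  "vec e j = int (Poly_Mapping.lookup e j)"

definition sig :: "nat \<Rightarrow> nat \<Rightarrow> ((nat \<Rightarrow>\<^sub>0 nat) \<Rightarrow> 'r) \<Rightarrow> 'r \<Rightarrow> 'k::field mpoly \<Rightarrow> 'k" where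
  "sig s d \<kappa> \<rho> p = (\<Sum>e\<in>{e\<in>Md s d. \<kappa> e = \<rho>}. Poly_Mapping.lookup p e)"

lemma tdeg_superset:
  assumes "finite S" "Poly_Mapping.keys e \<subseteq> S"
  shows "tdeg e = (\<Sum>j\<in>S. Poly_Mapping.lookup e j)"
  unfolding tdeg_def by (rule sum.mono_neutral_left) (use assms in \<open>auto simp: in_keys_iff\<close>)

lemma tdeg_sum: "Poly_Mapping.keys e \<subseteq> {..<s} \<Longrightarrow> tdeg e = (\<Sum>j<s. Poly_Mapping.lookup e j)"
  by (rule tdeg_superset) auto

lemma keys_add_nat: "Poly_Mapping.keys (a + b :: 'x \<Rightarrow>\<^sub>0 nat) = Poly_Mapping.keys a \<union> Poly_Mapping.keys b"
  by (auto simp: in_keys_iff lookup_add)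

lemma tdeg_add: "tdeg (a + b :: nat \<Rightarrow>\<^sub>0 nat) = tdeg a + tdeg b"
proof -
  let ?S = "Poly_Mapping.keys a \<union> Poly_Mapping.keys b"
  have "tdeg (a + b) = (\<Sum>j\<in>?S. Poly_Mapping.lookup (a + b) j)"
    by (rule tdeg_superset) (auto simp: keys_add_nat)
  also have "\<dots> = (\<Sum>j\<in>?S. Poly_Mapping.lookup a j) + (\<Sum>j\<in>?S. Poly_Mapping.lookup b j)"
    by (simp add: lookup_add sum.distrib)
  also have "\<dots> = tdeg a + tdeg b"
    by (simp add: tdeg_superset[symmetric])
  finally show ?thesis .
qed

lemma lookup_le_tdeg: "Poly_Mapping.lookup e j \<le> tdeg e"
  unfolding tdeg_def
  by (cases "j \<in> Poly_Mapping.keys e") (auto intro: member_le_sum simp: in_keys_iff)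

lemma finite_Md: "finite (Md s d)"
proof -
  have "Poly_Mapping.lookup ` Md s d \<subseteq>
        {f. \<forall>x. (x \<in> {..<s} \<longrightarrow> f x \<in> {0..d}) \<and> (x \<notin> {..<s} \<longrightarrow> f x = 0)}"
  proof (clarsimp, intro conjI allI impI)
    fix e x assume "e \<in> Md s d"
    then have e: "Poly_Mapping.keys e \<subseteq> {..<s}" "tdeg e = d" by (auto simp: Md_def monomials_in_def)
    show "Poly_Mapping.lookup e x \<le> d" using lookup_le_tdeg e by metis
    assume "\<not> x < s" then show "Poly_Mapping.lookup e x = 0" using e by (auto simp: in_keys_iff)
  qed
  then have "finite (Poly_Mapping.lookup ` Md s d)"
    by (rule finite_subset) (intro finite_set_of_finite_funs, auto)
  then show ?thesis by (rule finite_imageD) (auto simp: inj_on_def)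
qed

lemma sum_lessThan_add_split:
  fixes n m :: nat
  shows "(\<Sum>i<n + m. f i) = (\<Sum>i<n. f i) + (\<Sum>i<m. f (n + i)::'a::comm_monoid_add)"
  by (induction m) (auto simp: add.assoc)

lemma gen_ideal_0: "0 \<in> gen_ideal s G"
  unfolding gen_ideal_def by (intro CollectI exI[of _ 0]) auto

lemma gen_ideal_add:
  fixes p p' :: "'k::field mpoly"
  assumes "p \<in> gen_ideal s G" "p' \<in> gen_ideal s G"
  shows "p + p' \<in> gen_ideal s G"
proof -
  obtain n and q g :: "nat \<Rightarrow> 'k::field mpoly" where 1: "\<forall>i<n. q i \<in> polys s \<and> g i \<in> G" "p = (\<Sum>i<n. q i * g i)"
    using assms(1) unfolding gen_ideal_def by blast
  obtain n' and q' g' :: "nat \<Rightarrow> 'k::field mpoly" where 2: "\<forall>i<n'. q' i \<in> polys s \<and> g' i \<in> G" "p' = (\<Sum>i<n'. q' i * g' i)"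
    using assms(2) unfolding gen_ideal_def by blast
  define Q where "Q i = (if i < n then q i else q' (i - n))" for i
  define H where "H i = (if i < n then g i else g' (i - n))" for i
  have "(\<Sum>i<n + n'. Q i * H i) = (\<Sum>i<n. Q i * H i) + (\<Sum>i<n'. Q (n + i) * H (n + i))"
    by (rule sum_lessThan_add_split)
  also have "\<dots> = p + p'" using 1 2 by (simp add: Q_def H_def)
  finally have "p + p' = (\<Sum>i<n + n'. Q i * H i)" by simp
  moreover have "\<forall>i<n + n'. Q i \<in> polys s \<and> H i \<in> G"
    using 1 2 by (auto simp: Q_def H_def)
  ultimately show ?thesis unfolding gen_ideal_def by blast
qed

lemma gen_ideal_sum:
  assumes "finite A" "\<And>x. x \<in> A \<Longrightarrow> f x \<in> gen_ideal s G"
  shows "sum f A \<in> gen_ideal s G"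
  using assms by (induction A rule: finite_induct) (auto intro: gen_ideal_0 gen_ideal_add)

lemma gen_ideal_single:
  assumes "q \<in> polys s" "g \<in> G"
  shows "q * g \<in> gen_ideal s G"
  unfolding gen_ideal_def
  by (intro CollectI exI[of _ "1::nat"] exI[of _ "\<lambda>_. q"] exI[of _ "\<lambda>_. g"]) (use assms in auto)

lemma lookup_pos_part:
  "Poly_Mapping.lookup (pos_part s a) = (\<lambda>j. if j < s then nat (a j) else 0)"
  unfolding pos_part_def
  by (rule lookup_Abs_poly_mapping, rule finite_subset[of _ "{..<s}"]) auto

lemma lookup_neg_part:
  "Poly_Mapping.lookup (neg_part s a) = (\<lambda>j. if j < s then nat (- a j) else 0)"
  unfolding neg_part_def
  by (rule lookup_Abs_poly_mapping, rule finite_subset[of _ "{..<s}"]) auto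

lemma binom_in_ideal:
  assumes e: "e \<in> monomials_in s" and r: "r \<in> monomials_in s"
    and a: "(\<lambda>j. vec e j - vec r j) \<in> L"
  shows "Poly_Mapping.single e c - Poly_Mapping.single r c \<in> (lattice_ideal s L :: 'k::field mpoly set)"
proof -
  define a where "a = (\<lambda>j. vec e j - vec r j)"
  define w where "w = Abs_poly_mapping (\<lambda>j. min (Poly_Mapping.lookup e j) (Poly_Mapping.lookup r j))"
  have lw: "Poly_Mapping.lookup w = (\<lambda>j. min (Poly_Mapping.lookup e j) (Poly_Mapping.lookup r j))"
    unfolding w_def
    by (rule lookup_Abs_poly_mapping, rule finite_subset[of _ "{j. Poly_Mapping.lookup e j \<noteq> 0}"]) auto
  have ek: "Poly_Mapping.lookup e j = 0" if "\<not> j < s" for j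
    using e that by (auto simp: monomials_in_def in_keys_iff)
  have rk: "Poly_Mapping.lookup r j = 0" if "\<not> j < s" for j
    using r that by (auto simp: monomials_in_def in_keys_iff)
  have eP: "e = w + pos_part s a"
    by (rule poly_mapping_eqI) (auto simp: lookup_add lw lookup_pos_part a_def vec_def ek)
  have rN: "r = w + neg_part s a"
    by (rule poly_mapping_eqI) (auto simp: lookup_add lw lookup_neg_part a_def vec_def rk)
  have wm: "w \<in> monomials_in s"
  proof -
    have "Poly_Mapping.keys w \<subseteq> Poly_Mapping.keys e" by (auto simp: in_keys_iff lw)
    then show ?thesis using e by (auto simp: monomials_in_def)
  qed
  have eq: "Poly_Mapping.single e c - Poly_Mapping.single r c =
     Poly_Mapping.single w c * (monomial (pos_part s a) - monomial (neg_part s a) :: 'k mpoly)"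
    by (simp add: monomial_def right_diff_distrib mult_single eP rN)
  have "Poly_Mapping.single w c \<in> (polys s :: 'k mpoly set)"
    using wm by (auto simp: polys_def)
  moreover have "(monomial (pos_part s a) - monomial (neg_part s a) :: 'k mpoly)
     \<in> {monomial (pos_part s a) - monomial (neg_part s a) | a. a \<in> L}"
    using a a_def by blast
  ultimately show ?thesis unfolding eq lattice_ideal_def by (rule gen_ideal_single)
qed



lemma finite_C: "finite {e\<in>Md s d. \<kappa> e = \<rho>}"
  using finite_Md by auto

lemma sig_add: "sig s d \<kappa> \<rho> (p + q) = sig s d \<kappa> \<rho> p + sig s d \<kappa> \<rho> q"
  by (simp add: sig_def lookup_add sum.distrib)

lemma sig_diff: "sig s d \<kappa> \<rho> (p - q) = sig s d \<kappa> \<rho> p - sig s d \<kappa> \<rho> q"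
  by (simp add: sig_def lookup_minus sum_subtractf)

lemma sig_sum: "sig s d \<kappa> \<rho> (sum f A) = (\<Sum>x\<in>A. sig s d \<kappa> \<rho> (f x))"
  unfolding sig_def lookup_sum by (rule sum.swap)

lemma sig_smult: "sig s d \<kappa> \<rho> (smult_mp c p) = c * sig s d \<kappa> \<rho> p"
  by (simp add: sig_def lookup_smult_mp sum_distrib_left)

lemma sig_shift:
  fixes q :: "'k::field mpoly"
  shows "sig s d \<kappa> \<rho> (q * Poly_Mapping.single a 1) =
    (\<Sum>l\<in>{l. l + a \<in> {e\<in>Md s d. \<kappa> e = \<rho>}}. Poly_Mapping.lookup q l)"
proof -
  let ?C = "{e\<in>Md s d. \<kappa> e = \<rho>}"
  let ?Ca = "{l. l + a \<in> ?C}"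
  have fC: "finite ?C" by (rule finite_C)
  have inj: "inj_on (\<lambda>l. l + a) ?Ca" by (auto simp: inj_on_def)
  have img: "(\<lambda>l. l + a) ` ?Ca = ?C \<inter> range (\<lambda>l. l + a)" by auto
  have "sig s d \<kappa> \<rho> (q * Poly_Mapping.single a 1) =
        (\<Sum>e\<in>?C \<inter> range (\<lambda>l. l + a). Poly_Mapping.lookup (q * Poly_Mapping.single a 1) e)"
    unfolding sig_def
    by (rule sum.mono_neutral_right) (use fC in \<open>auto intro!: lookup_mult_single_zero\<close>)
  also have "\<dots> = (\<Sum>l\<in>?Ca. Poly_Mapping.lookup (q * Poly_Mapping.single a 1) (l + a))"
    unfolding img[symmetric] by (rule sum.reindex[OF inj, unfolded comp_def])
  also have "\<dots> = (\<Sum>l\<in>?Ca. Poly_Mapping.lookup q l)"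
    by (simp add: lookup_mult_single_shift)
  finally show ?thesis .
qed

lemma sig_vanish:
  fixes L :: "(nat \<Rightarrow> int) set"
  assumes hom: "\<forall>a\<in>L. (\<Sum>j<s. a j) = 0"
    and L0: "\<forall>a\<in>L. \<forall>j. \<not> j < s \<longrightarrow> a j = 0"
    and kap: "\<forall>u\<in>Md s d. \<forall>v\<in>Md s d. (\<lambda>j. vec u j - vec v j) \<in> L \<longrightarrow> \<kappa> u = \<kappa> v"
    and p: "p \<in> (lattice_ideal s L :: 'k::field mpoly set)"
  shows "sig s d \<kappa> \<rho> p = 0"
proof -
  have gen: "sig s d \<kappa> \<rho> (q * g) = 0"
    if g: "g \<in> {monomial (pos_part s a) - monomial (neg_part s a) | a. a \<in> L}" for q g :: "'k mpoly"
  proof -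
    obtain a where a: "a \<in> L" and g: "g = monomial (pos_part s a) - monomial (neg_part s a)"
      using g by blast
    define P where "P = pos_part s a"
    define N where "N = neg_part s a"
    have kP: "Poly_Mapping.keys P \<subseteq> {..<s}" by (auto simp: P_def in_keys_iff lookup_pos_part split: if_splits)
    have kN: "Poly_Mapping.keys N \<subseteq> {..<s}" by (auto simp: N_def in_keys_iff lookup_neg_part split: if_splits)
    have "int (tdeg P) - int (tdeg N) = (\<Sum>j<s. int (nat (a j)) - int (nat (- a j)))"
      using kP kN by (simp add: tdeg_sum P_def N_def lookup_pos_part lookup_neg_part sum_subtractf)
    also have "\<dots> = (\<Sum>j<s. a j)" by (rule sum.cong) auto
    also have "\<dots> = 0" using hom a by auto
    finally have tPN: "tdeg P = tdeg N" by simp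
    have diffa: "(\<lambda>j. vec (l + P) j - vec (l + N) j) = a" for l
    proof
      fix j show "vec (l + P) j - vec (l + N) j = a j"
        using L0 a by (auto simp: vec_def lookup_add P_def N_def lookup_pos_part lookup_neg_part)
    qed
    have Md_iff: "l + P \<in> Md s d \<longleftrightarrow> l + N \<in> Md s d" for l
      unfolding Md_def monomials_in_def mem_Collect_eq keys_add_nat tdeg_add tPN
      using kP kN by blast
    have CPN: "{l. l + P \<in> {e\<in>Md s d. \<kappa> e = \<rho>}} = {l. l + N \<in> {e\<in>Md s d. \<kappa> e = \<rho>}}"
    proof -
      have "\<kappa> (l + P) = \<kappa> (l + N)" if "l + P \<in> Md s d" "l + N \<in> Md s d" for l
        using kap that diffa a by metis
      then show ?thesis using Md_iff by auto
    qed
    show ?thesis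
      unfolding g monomial_def P_def[symmetric] N_def[symmetric]
      by (simp only: right_diff_distrib sig_diff sig_shift CPN diff_self)
  qed
  obtain n and q g :: "nat \<Rightarrow> 'k mpoly" where
    1: "\<forall>i<n. q i \<in> polys s \<and> g i \<in> {monomial (pos_part s a) - monomial (neg_part s a) | a. a \<in> L}"
       "p = (\<Sum>i<n. q i * g i)"
    using p unfolding lattice_ideal_def gen_ideal_def by blast
  show ?thesis using 1 gen by (simp add: sig_sum)
qed



lemma poly_expand:
  fixes p :: "'k::field mpoly"
  assumes "finite S" "Poly_Mapping.keys p \<subseteq> S"
  shows "p = (\<Sum>e\<in>S. Poly_Mapping.single e (Poly_Mapping.lookup p e))"
proof (rule poly_mapping_eqI)
  fix k
  have "(\<Sum>e\<in>S. Poly_Mapping.lookup (Poly_Mapping.single e (Poly_Mapping.lookup p e)) k)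
      = (\<Sum>e\<in>S. if e = k then Poly_Mapping.lookup p e else 0)"
    by (rule sum.cong) (auto simp: lookup_single when_def)
  also have "\<dots> = Poly_Mapping.lookup p k"
    using assms by (auto simp: in_keys_iff)
  finally show "Poly_Mapping.lookup p k = Poly_Mapping.lookup (\<Sum>e\<in>S. Poly_Mapping.single e (Poly_Mapping.lookup p e)) k"
    by (simp add: lookup_sum)
qed

lemma single_sum: "Poly_Mapping.single k (sum f A) = (\<Sum>x\<in>A. Poly_Mapping.single k (f x))"
  by (rule poly_mapping_eqI) (auto simp: lookup_sum lookup_single when_def)

lemma in_ideal_if_sig:
  fixes L :: "(nat \<Rightarrow> int) set" and p :: "'k::field mpoly"
  assumes kap: "\<forall>u\<in>Md s d. \<forall>v\<in>Md s d. ((\<lambda>j. vec u j - vec v j) \<in> L \<longleftrightarrow> \<kappa> u = \<kappa> v)"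
    and kp: "Poly_Mapping.keys p \<subseteq> Md s d"
    and sg: "\<forall>\<rho>\<in>\<kappa> ` Md s d. sig s d \<kappa> \<rho> p = 0"
  shows "p \<in> lattice_ideal s L"
proof -
  define rep where "rep \<rho> = (SOME e. e \<in> Md s d \<and> \<kappa> e = \<rho>)" for \<rho>
  have rep: "rep (\<kappa> e) \<in> Md s d \<and> \<kappa> (rep (\<kappa> e)) = \<kappa> e" if "e \<in> Md s d" for e
  proof -
    have "\<exists>x. x \<in> Md s d \<and> \<kappa> x = \<kappa> e" using that by blast
    then show ?thesis unfolding rep_def by (rule someI_ex)
  qed
  have p_exp: "p = (\<Sum>e\<in>Md s d. Poly_Mapping.single e (Poly_Mapping.lookup p e))"
    by (rule poly_expand[OF finite_Md kp])
  have zero: "(\<Sum>e\<in>Md s d. Poly_Mapping.single (rep (\<kappa> e)) (Poly_Mapping.lookup p e)) = 0"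
  proof -
    have "(\<Sum>e\<in>Md s d. Poly_Mapping.single (rep (\<kappa> e)) (Poly_Mapping.lookup p e)) =
      (\<Sum>\<rho>\<in>\<kappa>`Md s d. \<Sum>e\<in>{x \<in> Md s d. \<kappa> x = \<rho>}. Poly_Mapping.single (rep (\<kappa> e)) (Poly_Mapping.lookup p e))"
      by (rule sum.group[symmetric]) (auto simp: finite_Md)
    also have "\<dots> = (\<Sum>\<rho>\<in>\<kappa>`Md s d. \<Sum>e\<in>{x \<in> Md s d. \<kappa> x = \<rho>}. Poly_Mapping.single (rep \<rho>) (Poly_Mapping.lookup p e))"
      by (intro sum.cong) auto
    also have "\<dots> = (\<Sum>\<rho>\<in>\<kappa>`Md s d. Poly_Mapping.single (rep \<rho>) (sig s d \<kappa> \<rho> p))"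
      by (simp add: sig_def single_sum)
    also have "\<dots> = 0" using sg by (intro sum.neutral) simp
    finally show ?thesis .
  qed
  have "p = (\<Sum>e\<in>Md s d. Poly_Mapping.single e (Poly_Mapping.lookup p e) - Poly_Mapping.single (rep (\<kappa> e)) (Poly_Mapping.lookup p e))"
    unfolding sum_subtractf zero using p_exp by simp
  also have "\<dots> \<in> lattice_ideal s L"
    unfolding lattice_ideal_def
  proof (rule gen_ideal_sum[OF finite_Md])
    fix e assume e: "e \<in> Md s d"
    have L: "(\<lambda>j. vec e j - vec (rep (\<kappa> e)) j) \<in> L"
      using kap[rule_format, OF e conjunct1[OF rep[OF e]]] conjunct2[OF rep[OF e]] by simp
    have m1: "e \<in> monomials_in s" using e by (simp add: Md_def)
    have m2: "rep (\<kappa> e) \<in> monomials_in s" using conjunct1[OF rep[OF e]] by (simp add: Md_def)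
    show "Poly_Mapping.single e (Poly_Mapping.lookup p e) - Poly_Mapping.single (rep (\<kappa> e)) (Poly_Mapping.lookup p e)
        \<in> gen_ideal s {monomial (pos_part s a) - monomial (neg_part s a) |a. a \<in> L}"
      using binom_in_ideal[OF m1 m2 L, of "Poly_Mapping.lookup p e"] unfolding lattice_ideal_def .
  qed
  finally show ?thesis .
qed

lemma keys_smult_sum:
  fixes B :: "'k::field mpoly set"
  assumes "finite B" "B \<subseteq> polys_deg s d"
  shows "Poly_Mapping.keys (\<Sum>b\<in>B. smult_mp (c b) b) \<subseteq> Md s d"
proof
  fix e assume "e \<in> Poly_Mapping.keys (\<Sum>b\<in>B. smult_mp (c b) b)"
  then have "(\<Sum>b\<in>B. c b * Poly_Mapping.lookup b e) \<noteq> 0"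
    by (simp add: in_keys_iff lookup_sum lookup_smult_mp)
  then have "\<exists>b\<in>B. c b * Poly_Mapping.lookup b e \<noteq> 0"
    by (rule contrapos_np) (simp add: sum.neutral)
  then obtain b where "b \<in> B" "Poly_Mapping.lookup b e \<noteq> 0" by auto
  then have "e \<in> Poly_Mapping.keys b" "b \<in> polys_deg s d" using assms by (auto simp: in_keys_iff)
  then show "e \<in> Md s d" by (auto simp: polys_deg_def Md_def)
qed

lemma hilbert_fun_classes:
  fixes L :: "(nat \<Rightarrow> int) set"
  assumes hom: "\<forall>a\<in>L. (\<Sum>j<s. a j) = 0"
    and L0: "\<forall>a\<in>L. \<forall>j. \<not> j < s \<longrightarrow> a j = 0"
    and kap: "\<forall>u\<in>Md s d. \<forall>v\<in>Md s d. ((\<lambda>j. vec u j - vec v j) \<in> L \<longleftrightarrow> \<kappa> u = \<kappa> v)"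
  shows "hilbert_fun s (lattice_ideal s L :: 'k::field mpoly set) d = card (\<kappa> ` Md s d)"
proof -
  let ?R = "\<kappa> ` Md s d"
  let ?I = "lattice_ideal s L :: 'k mpoly set"
  let ?S = "{card B | B. finite B \<and> B \<subseteq> (polys_deg s d :: 'k mpoly set) \<and>
      (\<forall>c. (\<Sum>b\<in>B. smult_mp (c b) b) \<in> ?I \<longrightarrow> (\<forall>b\<in>B. c b = 0))}"
  have fR: "finite ?R" using finite_Md by simp
  have kap1: "\<forall>u\<in>Md s d. \<forall>v\<in>Md s d. (\<lambda>j. vec u j - vec v j) \<in> L \<longrightarrow> \<kappa> u = \<kappa> v"
    using kap by blast
  have upper: "card B \<le> card ?R" if B: "finite B" "B \<subseteq> (polys_deg s d :: 'k mpoly set)"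
    "\<forall>c. (\<Sum>b\<in>B. smult_mp (c b) b) \<in> ?I \<longrightarrow> (\<forall>b\<in>B. c b = 0)" for B
  proof (rule ccontr)
    assume "\<not> card B \<le> card ?R"
    then have "card B > card ?R" by simp
    from dep_lemma[OF fR B(1) this, of "\<lambda>b \<rho>. sig s d \<kappa> \<rho> b"] obtain c where
      c: "\<forall>\<rho>\<in>?R. (\<Sum>b\<in>B. c b * sig s d \<kappa> \<rho> b) = 0" "\<exists>b\<in>B. c b \<noteq> 0" by blast
    have "(\<Sum>b\<in>B. smult_mp (c b) b) \<in> ?I"
    proof (rule in_ideal_if_sig[OF kap])
      show "Poly_Mapping.keys (\<Sum>b\<in>B. smult_mp (c b) b) \<subseteq> Md s d"
        by (rule keys_smult_sum[OF B(1,2)])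
      show "\<forall>\<rho>\<in>?R. sig s d \<kappa> \<rho> (\<Sum>b\<in>B. smult_mp (c b) b) = 0"
        using c(1) by (simp add: sig_sum sig_smult)
    qed
    then have "\<forall>b\<in>B. c b = 0" using B(3) by (rule_tac mp[OF spec[OF B(3), of c]])
    then show False using c(2) by simp
  qed
  define rep where "rep \<rho> = (SOME e. e \<in> Md s d \<and> \<kappa> e = \<rho>)" for \<rho>
  have rep: "rep \<rho> \<in> Md s d \<and> \<kappa> (rep \<rho>) = \<rho>" if R: "\<rho> \<in> ?R" for \<rho>
  proof -
    obtain e where "e \<in> Md s d" "\<kappa> e = \<rho>" using R by blast
    then show ?thesis unfolding rep_def by (metis (mono_tags, lifting) someI)
  qed
  define mon where "mon \<rho> = (Poly_Mapping.single (rep \<rho>) 1 :: 'k mpoly)" for \<rho>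
  define B0 where "B0 = mon ` ?R"
  have inj: "inj_on mon ?R"
  proof (rule inj_onI)
    fix x y assume "x \<in> ?R" "y \<in> ?R" "mon x = mon y"
    then have "Poly_Mapping.lookup (mon x) (rep x) = Poly_Mapping.lookup (mon y) (rep x)" by simp
    then have "rep x = rep y" unfolding mon_def by (auto simp: lookup_single when_def split: if_splits)
    then show "x = y" using rep \<open>x \<in> ?R\<close> \<open>y \<in> ?R\<close> by metis
  qed
  have sig_mon: "sig s d \<kappa> \<rho> (mon \<rho>') = (if \<rho>' = \<rho> then 1 else 0)" if "\<rho>' \<in> ?R" for \<rho> \<rho>'
  proof -
    have "sig s d \<kappa> \<rho> (mon \<rho>') = (\<Sum>e\<in>{e\<in>Md s d. \<kappa> e = \<rho>}. if e = rep \<rho>' then 1 else 0)"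
      unfolding sig_def mon_def by (rule sum.cong) (auto simp: lookup_single when_def)
    also have "\<dots> = (if rep \<rho>' \<in> {e\<in>Md s d. \<kappa> e = \<rho>} then 1 else 0)"
      using finite_C[of s d \<kappa> \<rho>] by (simp add: sum.delta')
    also have "\<dots> = (if \<rho>' = \<rho> then 1 else 0)" using rep[OF that] by auto
    finally show ?thesis .
  qed
  have B0S: "card ?R \<in> ?S"
  proof -
    have "card B0 = card ?R" unfolding B0_def by (rule card_image[OF inj])
    moreover have "finite B0" using fR B0_def by simp
    moreover have "B0 \<subseteq> polys_deg s d"
      using rep by (auto simp: B0_def mon_def polys_deg_def Md_def)
    moreover have "\<forall>c. (\<Sum>b\<in>B0. smult_mp (c b) b) \<in> ?I \<longrightarrow> (\<forall>b\<in>B0. c b = 0)"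
    proof (intro allI impI ballI)
      fix c b assume inI: "(\<Sum>b\<in>B0. smult_mp (c b) b) \<in> ?I" and b: "b \<in> B0"
      then obtain \<rho> where \<rho>: "\<rho> \<in> ?R" "b = mon \<rho>" by (auto simp: B0_def)
      have "0 = sig s d \<kappa> \<rho> (\<Sum>b\<in>B0. smult_mp (c b) b)"
        by (rule sig_vanish[OF hom L0 kap1 inI, symmetric])
      also have "\<dots> = (\<Sum>\<rho>'\<in>?R. c (mon \<rho>') * sig s d \<kappa> \<rho> (mon \<rho>'))"
        unfolding B0_def sig_sum sig_smult by (rule sum.reindex[OF inj, unfolded comp_def])
      also have "\<dots> = (\<Sum>\<rho>'\<in>?R. if \<rho>' = \<rho> then c (mon \<rho>') else 0)"
        by (rule sum.cong) (auto simp: sig_mon)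
      also have "\<dots> = c (mon \<rho>)" using fR \<rho>(1) by (simp add: sum.delta')
      finally show "c b = 0" using \<rho> by simp
    qed
    ultimately show ?thesis unfolding mem_Collect_eq by (intro exI[of _ B0]) simp
  qed
  have Sle: "y \<le> card ?R" if "y \<in> ?S" for y
  proof -
    from that have "\<exists>B. y = card B \<and> (finite B \<and> B \<subseteq> (polys_deg s d :: 'k mpoly set) \<and>
      (\<forall>c. (\<Sum>b\<in>B. smult_mp (c b) b) \<in> ?I \<longrightarrow> (\<forall>b\<in>B. c b = 0)))"
      by (simp only: mem_Collect_eq)
    then obtain B where BB: "y = card B \<and> (finite B \<and> B \<subseteq> (polys_deg s d :: 'k mpoly set) \<and>
      (\<forall>c. (\<Sum>b\<in>B. smult_mp (c b) b) \<in> ?I \<longrightarrow> (\<forall>b\<in>B. c b = 0)))" ..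
    note B = conjunct1[OF BB] and PB = conjunct2[OF BB]
    show ?thesis unfolding B
      by (rule upper[OF conjunct1[OF PB] conjunct1[OF conjunct2[OF PB]] conjunct2[OF conjunct2[OF PB]]])
  qed
  have fS: "finite ?S"
  proof (rule finite_subset[of _ "{..card ?R}"])
    show "?S \<subseteq> {..card ?R}" using Sle by (intro subsetI) (simp only: atMost_iff)
  qed simp
  show ?thesis unfolding hilbert_fun_def
  proof (rule Max_eqI[OF fS])
    show "y \<le> card ?R" if "y \<in> ?S" for y using that by (rule Sle)
    show "card ?R \<in> ?S" by (rule B0S)
  qed
qed



definition vm :: "nat \<Rightarrow> (nat \<Rightarrow> int) \<Rightarrow> (nat \<Rightarrow> nat \<Rightarrow> int) \<Rightarrow> nat \<Rightarrow> int" where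
  "vm n x X = (\<lambda>k. \<Sum>j<n. x j * X j k)"

lemma vm_assoc: "vm n (vm m x X) Y k = vm m x (mat_mul n X Y) k"
proof -
  have "vm n (vm m x X) Y k = (\<Sum>j<n. \<Sum>i<m. x i * X i j * Y j k)"
    by (simp add: vm_def sum_distrib_right)
  also have "\<dots> = (\<Sum>i<m. \<Sum>j<n. x i * X i j * Y j k)" by (rule sum.swap)
  also have "\<dots> = vm m x (mat_mul n X Y) k"
    by (simp add: vm_def mat_mul_def sum_distrib_left mult.assoc)
  finally show ?thesis .
qed

lemma vm_inv:
  assumes "\<forall>i<n. \<forall>j<n. mat_mul n X Y i j = (if i = j then 1 else 0)" "l < n"
  shows "vm n (vm n x X) Y l = x l"
proof -
  have "vm n (vm n x X) Y l = vm n x (mat_mul n X Y) l" by (rule vm_assoc)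
  also have "\<dots> = (\<Sum>j<n. if j = l then x j else 0)"
    unfolding vm_def by (rule sum.cong) (use assms in auto)
  also have "\<dots> = x l" using assms(2) by simp
  finally show ?thesis .
qed

lemma vm_cong: "(\<And>j. j < n \<Longrightarrow> x j = y j) \<Longrightarrow> vm n x X k = vm n y X k"
  unfolding vm_def by (rule sum.cong) auto

lemma vm_cong_mat: "(\<And>j. j < n \<Longrightarrow> X j k = Y j k) \<Longrightarrow> vm n x X k = vm n x Y k"
  unfolding vm_def by (rule sum.cong) auto

lemma vm_diff: "vm n (\<lambda>j. x j - y j) X k = vm n x X k - vm n y X k"
  by (simp add: vm_def left_diff_distrib sum_subtractf)

locale snf_setup =
  fixes s m :: nat and A D P Pi Q Qi :: "nat \<Rightarrow> nat \<Rightarrow> int"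
  assumes s2: "s \<ge> 2"
    and PPi: "\<forall>i<m. \<forall>j<m. mat_mul m P Pi i j = (if i = j then 1 else 0)"
    and PiP: "\<forall>i<m. \<forall>j<m. mat_mul m Pi P i j = (if i = j then 1 else 0)"
    and QQi: "\<forall>i<s. \<forall>j<s. mat_mul s Q Qi i j = (if i = j then 1 else 0)"
    and QiQ: "\<forall>i<s. \<forall>j<s. mat_mul s Qi Q i j = (if i = j then 1 else 0)"
    and Deq: "\<forall>i<m. \<forall>j<s. D i j = mat_mul s (mat_mul m P A) Q i j"
    and Ddiag: "\<forall>i<m. \<forall>j<s. i \<noteq> j \<longrightarrow> D i j = 0"
    and Dnn: "\<forall>i<min m s. D i i \<ge> 0"
    and Ddvd: "\<forall>i. i + 1 < min m s \<longrightarrow> D i i dvd D (i + 1) (i + 1)"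
    and hom: "homogeneous_lattice s (row_lattice m s A)"
    and rk: "lattice_rank (row_lattice m s A) = s - 1"
begin

abbreviation "L \<equiv> row_lattice m s A"

definition \<delta> :: "nat \<Rightarrow> int" where "\<delta> k = (if k < m then D k k else 0)"

lemma vmD: "k < s \<Longrightarrow> vm m y D k = y k * \<delta> k"
proof -
  assume k: "k < s"
  have "vm m y D k = (\<Sum>i<m. if i = k then y i * D i i else 0)"
    unfolding vm_def by (rule sum.cong) (use Ddiag k in auto)
  also have "\<dots> = y k * \<delta> k" by (simp add: \<delta>_def)
  finally show ?thesis .
qed

lemma L_mem_iff: "v \<in> L \<longleftrightarrow> (\<forall>j. \<not> j < s \<longrightarrow> v j = 0) \<and> (\<exists>c. \<forall>j<s. v j = vm m c A j)"
  unfolding row_lattice_def vm_def by (auto; metis)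

lemma L_char:
  assumes v0: "\<forall>j. \<not> j < s \<longrightarrow> v j = 0"
  shows "v \<in> L \<longleftrightarrow> (\<forall>k<s. \<delta> k dvd vm s v Q k)"
proof
  assume "v \<in> L"
  then obtain c where c: "\<forall>j<s. v j = vm m c A j" by (auto simp: L_mem_iff)
  define y where "y = vm m c Pi"
  show "\<forall>k<s. \<delta> k dvd vm s v Q k"
  proof (intro allI impI)
    fix k assume k: "k < s"
    have "vm s v Q k = vm s (vm m c A) Q k" by (rule vm_cong) (use c in auto)
    also have "vm m c A j = vm m (vm m y P) A j" for j
      by (rule vm_cong) (use vm_inv[OF PiP] in \<open>auto simp: y_def\<close>)
    then have "vm m c A = vm m (vm m y P) A" by auto
    also have "vm m (vm m y P) A = vm m y (mat_mul m P A)" by (rule ext, rule vm_assoc)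
    also have "vm s (vm m y (mat_mul m P A)) Q k = vm m y (mat_mul s (mat_mul m P A) Q) k" by (rule vm_assoc)
    also have "\<dots> = vm m y D k" by (rule vm_cong_mat) (use Deq k in auto)
    also have "\<dots> = y k * \<delta> k" by (rule vmD[OF k])
    finally show "\<delta> k dvd vm s v Q k" by simp
  qed
next
  assume dv: "\<forall>k<s. \<delta> k dvd vm s v Q k"
  define z where "z k = (if \<delta> k = 0 then 0 else vm s v Q k div \<delta> k)" for k
  have vz: "vm s v Q k = vm m z D k" if k: "k < s" for k
  proof -
    have "vm s v Q k = z k * \<delta> k" using dv k by (auto simp: z_def)
    then show ?thesis using vmD[OF k] by simp
  qed
  define c where "c = vm m z P"
  have "\<forall>j<s. v j = vm m c A j"
  proof (intro allI impI)
    fix j assume j: "j < s"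
    have "v j = vm s (vm s v Q) Qi j" by (rule vm_inv[OF QQi j, symmetric])
    also have "\<dots> = vm s (vm s (vm m z (mat_mul m P A)) Q) Qi j"
    proof (rule vm_cong)
      fix k assume k: "k < s"
      have "vm s v Q k = vm m z D k" by (rule vz[OF k])
      also have "\<dots> = vm m z (mat_mul s (mat_mul m P A) Q) k" by (rule vm_cong_mat) (use Deq k in auto)
      also have "\<dots> = vm s (vm m z (mat_mul m P A)) Q k" by (rule vm_assoc[symmetric])
      finally show "vm s v Q k = vm s (vm m z (mat_mul m P A)) Q k" .
    qed
    also have "\<dots> = vm m z (mat_mul m P A) j" by (rule vm_inv[OF QQi j])
    also have "\<dots> = vm m c A j" unfolding c_def by (rule vm_assoc[symmetric])
    finally show "v j = vm m c A j" .
  qed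
  then show "v \<in> L" using v0 by (auto simp: L_mem_iff)
qed

end


context snf_setup begin

definition w :: "nat \<Rightarrow> int" where "w k = (\<Sum>l<s. Qi k l)"

lemma L0: "a \<in> L \<Longrightarrow> \<not> j < s \<Longrightarrow> a j = 0"
  by (auto simp: L_mem_iff)

lemma homL: "a \<in> L \<Longrightarrow> (\<Sum>j<s. a j) = 0"
  using hom by (auto simp: homogeneous_lattice_def)

lemma sum_Q:
  shows "(\<Sum>l<s. v l) = (\<Sum>k<s. vm s v Q k * w k)"
proof -
  have "(\<Sum>l<s. v l) = (\<Sum>l<s. vm s (vm s v Q) Qi l)"
    by (rule sum.cong) (use vm_inv[OF QQi] in auto)
  also have "\<dots> = (\<Sum>l<s. \<Sum>k<s. vm s v Q k * Qi k l)" by (simp add: vm_def)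
  also have "\<dots> = (\<Sum>k<s. \<Sum>l<s. vm s v Q k * Qi k l)" by (rule sum.swap)
  also have "\<dots> = (\<Sum>k<s. vm s v Q k * w k)" by (simp add: w_def sum_distrib_left)
  finally show ?thesis .
qed

lemma \<delta>_nn: "k < s \<Longrightarrow> \<delta> k \<ge> 0"
  using Dnn by (auto simp: \<delta>_def)

lemma \<delta>_step: "k + 1 < s \<Longrightarrow> \<delta> k = 0 \<Longrightarrow> \<delta> (k + 1) = 0"
  using Ddvd by (auto simp: \<delta>_def)

lemma \<delta>_zero_up: "\<delta> i = 0 \<Longrightarrow> i \<le> j \<Longrightarrow> j < s \<Longrightarrow> \<delta> j = 0"
proof (induction j)
  case 0 then show ?case by simp
next
  case (Suc j)
  show ?case
  proof (cases "i \<le> j")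
    case True then show ?thesis using Suc \<delta>_step[of j] by simp
  next
    case False then have "i = Suc j" using Suc by simp
    then show ?thesis using Suc by simp
  qed
qed

lemma w_zero: assumes k: "k < s" "\<delta> k \<noteq> 0" shows "w k = 0"
proof -
  define x where "x l = (if l < s then \<delta> k * Qi k l else 0)" for l
  have x0: "\<forall>j. \<not> j < s \<longrightarrow> x j = 0" by (simp add: x_def)
  have xQ: "vm s x Q k' = (if k' = k then \<delta> k else 0)" if "k' < s" for k'
  proof -
    have "vm s x Q k' = \<delta> k * mat_mul s Qi Q k k'"
      by (simp add: vm_def x_def mat_mul_def sum_distrib_left mult.assoc)
    then show ?thesis using QiQ k that by auto
  qed
  have "x \<in> L" unfolding L_char[OF x0] using xQ by auto
  then have "0 = (\<Sum>l<s. x l)" using homL by simp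
  also have "\<dots> = (\<Sum>k'<s. vm s x Q k' * w k')" by (rule sum_Q)
  also have "\<dots> = (\<Sum>k'<s. if k' = k then \<delta> k * w k else 0)"
    by (rule sum.cong) (auto simp: xQ)
  also have "\<dots> = \<delta> k * w k" using k by simp
  finally show ?thesis using k by simp
qed

definition e0 :: "nat \<Rightarrow> int" where "e0 l = (if l = 0 then 1 else 0)"

lemma sum_e0: "(\<Sum>k<s. vm s e0 Q k * w k) = 1"
proof -
  have "(\<Sum>l<s. e0 l) = 1" using s2 by (simp add: e0_def)
  then show ?thesis using sum_Q by simp
qed

lemma \<delta>_last: "\<delta> (s - 1) = 0"
proof (rule ccontr)
  assume h: "\<delta> (s - 1) \<noteq> 0"
  have "\<delta> k \<noteq> 0" if "k < s" for k
    using \<delta>_zero_up[of k "s - 1"] h that s2 by fastforce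
  then have "\<forall>k<s. w k = 0" using w_zero by blast
  then show False using sum_e0 by simp
qed

lemma rank_le:
  assumes z: "\<forall>j. k \<le> j \<and> j < s \<longrightarrow> \<delta> j = 0"
  shows "lattice_rank L \<le> k"
proof -
  let ?S = "{card B | B. finite B \<and> B \<subseteq> L \<and>
      (\<forall>c::(nat \<Rightarrow> int) \<Rightarrow> int. (\<forall>j. (\<Sum>b\<in>B. c b * b j) = 0) \<longrightarrow> (\<forall>b\<in>B. c b = 0))}"
  have le: "card B \<le> k" if B: "finite B" "B \<subseteq> L"
     "\<forall>c::(nat \<Rightarrow> int) \<Rightarrow> int. (\<forall>j. (\<Sum>b\<in>B. c b * b j) = 0) \<longrightarrow> (\<forall>b\<in>B. c b = 0)" for B
  proof (rule ccontr)
    assume "\<not> card B \<le> k"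
    then have "card B > card {..<k}" by simp
    from dep_lemma[OF finite_lessThan B(1) this, of "\<lambda>b j. vm s b Q j"] obtain c where
      c: "\<forall>j\<in>{..<k}. (\<Sum>b\<in>B. c b * vm s b Q j) = 0" "\<exists>b\<in>B. c b \<noteq> 0" by blast
    have hi: "vm s b Q j = 0" if "b \<in> B" "k \<le> j" "j < s" for b j
    proof -
      have bL: "b \<in> L" using that B by auto
      have "\<delta> j dvd vm s b Q j" using L_char[of b] bL L0[OF bL] that by blast
      then show ?thesis using z that by simp
    qed
    have all: "(\<Sum>b\<in>B. c b * vm s b Q j) = 0" if "j < s" for j
    proof (cases "j < k")
      case True then show ?thesis using c(1) by simp
    next
      case False then show ?thesis using hi that by (simp add: sum.neutral)
    qed
    have Z: "(\<Sum>b\<in>B. c b * b j) = 0" for j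
    proof (cases "j < s")
      case True
      have "(\<Sum>b\<in>B. c b * b j) = (\<Sum>b\<in>B. c b * (\<Sum>k<s. vm s b Q k * Qi k j))"
        by (rule sum.cong) (use vm_inv[OF QQi True] in \<open>auto simp: vm_def\<close>)
      also have "\<dots> = (\<Sum>k<s. (\<Sum>b\<in>B. c b * vm s b Q k) * Qi k j)"
        by (simp add: sum_distrib_left sum_distrib_right mult.assoc sum.swap[of _ B])
      also have "\<dots> = 0" using all by simp
      finally show ?thesis .
    next
      case False
      show ?thesis by (rule sum.neutral) (use B(2) L0 False in auto)
    qed
    have "\<forall>b\<in>B. c b = 0" by (rule mp[OF spec[OF B(3), of c] allI[OF Z]])
    then show False using c(2) by simp
  qed
  have Sle: "y \<le> k" if "y \<in> ?S" for y
  proof -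
    from that have "\<exists>B. y = card B \<and> (finite B \<and> B \<subseteq> L \<and>
      (\<forall>c::(nat \<Rightarrow> int) \<Rightarrow> int. (\<forall>j. (\<Sum>b\<in>B. c b * b j) = 0) \<longrightarrow> (\<forall>b\<in>B. c b = 0)))"
      by (simp only: mem_Collect_eq)
    then obtain B where BB: "y = card B \<and> (finite B \<and> B \<subseteq> L \<and>
      (\<forall>c::(nat \<Rightarrow> int) \<Rightarrow> int. (\<forall>j. (\<Sum>b\<in>B. c b * b j) = 0) \<longrightarrow> (\<forall>b\<in>B. c b = 0)))" ..
    note B = conjunct1[OF BB] and PB = conjunct2[OF BB]
    show ?thesis unfolding B
      by (rule le[OF conjunct1[OF PB] conjunct1[OF conjunct2[OF PB]] conjunct2[OF conjunct2[OF PB]]])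
  qed
  have fS: "finite ?S"
  proof (rule finite_subset[of _ "{..k}"])
    show "?S \<subseteq> {..k}" using Sle by (intro subsetI) (simp only: atMost_iff)
  qed simp
  have "card {} \<in> ?S" unfolding mem_Collect_eq by (intro exI[of _ "{}"]) simp
  then have ne: "?S \<noteq> {}" by blast
  have "Max ?S \<le> k" unfolding Max_le_iff[OF fS ne] using Sle by blast
  then show ?thesis unfolding lattice_rank_def .
qed

lemma \<delta>_pos: "k < s - 1 \<Longrightarrow> \<delta> k > 0"
proof (rule ccontr)
  assume k: "k < s - 1" and "\<not> \<delta> k > 0"
  then have "\<delta> k = 0" using \<delta>_nn[of k] by simp
  then have "\<forall>j. k \<le> j \<and> j < s \<longrightarrow> \<delta> j = 0" using \<delta>_zero_up by blast
  then have "lattice_rank L \<le> k" by (rule rank_le)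
  then show False using rk k by simp
qed

lemma w_zero': "k < s - 1 \<Longrightarrow> w k = 0"
  using w_zero[of k] \<delta>_pos[of k] by simp

lemma sum_last_gen: "(\<Sum>k<s. f k * w k) = f (s - 1) * w (s - 1)"
proof -
  have "(\<Sum>k<s. f k * w k) = (\<Sum>k<s. if k = s - 1 then f k * w k else 0)"
  proof (rule sum.cong)
    fix x assume "x \<in> {..<s}"
    then show "f x * w x = (if x = s - 1 then f x * w x else 0)"
      using w_zero'[of x] by (cases "x = s - 1") auto
  qed simp
  also have "\<dots> = f (s - 1) * w (s - 1)" using s2 by simp
  finally show ?thesis .
qed

lemma w_last: "w (s - 1) * vm s e0 Q (s - 1) = 1"
proof -
  show ?thesis using sum_e0 sum_last_gen[of "vm s e0 Q"] by (simp add: mult.commute)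
qed

lemma w_sq: "w (s - 1) * w (s - 1) = 1"
proof -
  have "w (s - 1) = 1 \<or> w (s - 1) = -1" by (rule pos_zmult_eq_1_iff_lemma[OF w_last])
  then show ?thesis by auto
qed

lemma sum_last: "(\<Sum>l<s. v l) = vm s v Q (s - 1) * w (s - 1)"
proof -
  show ?thesis by (rule trans[OF sum_Q sum_last_gen])
qed

end


context snf_setup begin

definition M :: int where "M = (\<Prod>k<s - 1. \<delta> k)"

definition \<kappa> :: "(nat \<Rightarrow>\<^sub>0 nat) \<Rightarrow> nat \<Rightarrow> int" where
  "\<kappa> u = restrict (\<lambda>k. vm s (vec u) Q k mod \<delta> k) {..<s - 1}"

lemma M_pos: "M > 0"
  unfolding M_def by (rule prod_pos) (use \<delta>_pos in auto)

lemma \<delta>_dvd_M: "k < s - 1 \<Longrightarrow> \<delta> k dvd M"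
  unfolding M_def by (rule dvd_prodI) auto

lemma vec0: "u \<in> Md s d \<Longrightarrow> \<not> j < s \<Longrightarrow> vec u j = 0"
  by (auto simp: Md_def monomials_in_def vec_def in_keys_iff)

lemma sum_vec: "u \<in> Md s d \<Longrightarrow> (\<Sum>j<s. vec u j) = int d"
proof -
  assume u: "u \<in> Md s d"
  then have "tdeg u = (\<Sum>j<s. Poly_Mapping.lookup u j)" "tdeg u = d"
    by (auto simp: Md_def monomials_in_def intro: tdeg_sum)
  then show ?thesis by (simp add: vec_def)
qed

lemma w_ne: "w (s - 1) \<noteq> 0" using w_sq by auto

lemma kap_iff:
  assumes u: "u \<in> Md s d" and v: "v \<in> Md s d"
  shows "(\<lambda>j. vec u j - vec v j) \<in> L \<longleftrightarrow> \<kappa> u = \<kappa> v"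
proof -
  let ?x = "\<lambda>j. vec u j - vec v j"
  have x0: "\<forall>j. \<not> j < s \<longrightarrow> ?x j = 0" using vec0[OF u] vec0[OF v] by simp
  have "(\<Sum>j<s. ?x j) = 0" using sum_vec[OF u] sum_vec[OF v] by (simp add: sum_subtractf)
  then have "vm s ?x Q (s - 1) * w (s - 1) = 0" using sum_last[of ?x] by simp
  then have last: "vm s ?x Q (s - 1) = 0" using w_ne by simp
  have "?x \<in> L \<longleftrightarrow> (\<forall>k<s. \<delta> k dvd vm s ?x Q k)" by (rule L_char[OF x0])
  also have "\<dots> \<longleftrightarrow> (\<forall>k<s - 1. \<delta> k dvd vm s ?x Q k)"
  proof
    assume h: "\<forall>k<s - 1. \<delta> k dvd vm s ?x Q k"
    show "\<forall>k<s. \<delta> k dvd vm s ?x Q k"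
    proof (intro allI impI)
      fix k assume "k < s"
      then consider "k < s - 1" | "k = s - 1" by linarith
      then show "\<delta> k dvd vm s ?x Q k" using h last by cases auto
    qed
  qed auto
  also have "\<dots> \<longleftrightarrow> (\<forall>k<s - 1. vm s (vec u) Q k mod \<delta> k = vm s (vec v) Q k mod \<delta> k)"
    by (simp add: vm_diff mod_eq_dvd_iff)
  also have "\<dots> \<longleftrightarrow> \<kappa> u = \<kappa> v"
    unfolding \<kappa>_def by (auto simp: fun_eq_iff)
  finally show ?thesis .
qed

lemma kappa_image:
  assumes d: "int d \<ge> int (s - 1) * M"
  shows "\<kappa> ` Md s d = (\<Pi>\<^sub>E k\<in>{..<s - 1}. {0..<\<delta> k})"
proof
  show "\<kappa> ` Md s d \<subseteq> (\<Pi>\<^sub>E k\<in>{..<s - 1}. {0..<\<delta> k})"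
  proof (rule image_subsetI)
    fix u assume "u \<in> Md s d"
    show "\<kappa> u \<in> (\<Pi>\<^sub>E k\<in>{..<s - 1}. {0..<\<delta> k})"
      unfolding \<kappa>_def restrict_PiE_iff using \<delta>_pos by auto
  qed
next
  show "(\<Pi>\<^sub>E k\<in>{..<s - 1}. {0..<\<delta> k}) \<subseteq> \<kappa> ` Md s d"
  proof
    fix \<rho> assume \<rho>: "\<rho> \<in> (\<Pi>\<^sub>E k\<in>{..<s - 1}. {0..<\<delta> k})"
    define y where "y k = (if k < s - 1 then \<rho> k else w (s - 1) * int d)" for k
    define x where "x l = (if l < s then vm s y Qi l else 0)" for l
    have xQ: "vm s x Q k = y k" if "k < s" for k
    proof -
      have "vm s x Q k = vm s (vm s y Qi) Q k" by (rule vm_cong) (simp add: x_def)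
      also have "\<dots> = y k" by (rule vm_inv[OF QiQ that])
      finally show ?thesis .
    qed
    have s1: "s - 1 < s" using s2 by simp
    have sumx: "(\<Sum>l<s. x l) = int d"
      using sum_last[of x] xQ[OF s1] w_sq by (simp add: y_def algebra_simps)
    define x' where "x' l = (if l = 0 then int d - (\<Sum>i\<in>{1..<s}. x i mod M) else if l < s then x l mod M else 0)" for l
    have split: "(\<Sum>l<s. f l) = f 0 + (\<Sum>l\<in>{1..<s}. f l)" for f :: "nat \<Rightarrow> int"
      using s2 by (simp add: lessThan_atLeast0 sum.atLeast_Suc_lessThan)
    have bound: "(\<Sum>i\<in>{1..<s}. x i mod M) \<le> int d"
    proof -
      have "(\<Sum>i\<in>{1..<s}. x i mod M) \<le> (\<Sum>i\<in>{1..<s}. M)"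
        by (rule sum_mono) (use M_pos in \<open>simp add: order.strict_implies_order\<close>)
      also have "\<dots> = int (s - 1) * M" by simp
      finally show ?thesis using d by simp
    qed
    have x'nn: "x' l \<ge> 0" for l using bound M_pos by (simp add: x'_def)
    have x'in: "x' l = x l mod M" if "l \<in> {1..<s}" for l using that by (simp add: x'_def)
    have sumx': "(\<Sum>l<s. x' l) = int d"
    proof -
      have a: "(\<Sum>l\<in>{1..<s}. x' l) = (\<Sum>l\<in>{1..<s}. x l mod M)" by (rule sum.cong) (simp_all add: x'in)
      have b: "x' 0 = int d - (\<Sum>i\<in>{1..<s}. x i mod M)" by (simp add: x'_def)
      show ?thesis unfolding split[of x'] a b by simp
    qed
    have Mdvd: "M dvd x' l - x l" if "l < s" for l
    proof (cases "l = 0")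
      case True
      have "x' l - x l = (\<Sum>i\<in>{1..<s}. x i - x i mod M)"
        using True split[of x] sumx by (simp add: x'_def sum_subtractf)
      also have "M dvd \<dots>" by (intro dvd_sum) (simp add: minus_mod_eq_mult_div)
      finally show ?thesis .
    next
      case False
      then show ?thesis using that by (simp add: x'_def mod_eq_dvd_iff[symmetric] )
    qed
    define u where "u = Abs_poly_mapping (\<lambda>l. nat (x' l))"
    have lu: "Poly_Mapping.lookup u = (\<lambda>l. nat (x' l))"
      unfolding u_def
      by (rule lookup_Abs_poly_mapping, rule finite_subset[of _ "{..<s}"]) (use s2 in \<open>auto simp: x'_def\<close>)
    have vu: "vec u l = x' l" for l using x'nn[of l] by (simp add: vec_def lu)
    have um: "u \<in> monomials_in s" using s2 by (auto simp: monomials_in_def in_keys_iff lu x'_def split: if_splits)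
    have "int (tdeg u) = (\<Sum>l<s. vec u l)"
      using tdeg_sum[of u s] um by (simp add: monomials_in_def vec_def)
    then have "tdeg u = d" using sumx' vu by simp
    then have uM: "u \<in> Md s d" using um by (simp add: Md_def)
    have "\<kappa> u = \<rho>"
    proof
      fix k show "\<kappa> u k = \<rho> k"
      proof (cases "k < s - 1")
        case True
        then have ks: "k < s" by simp
        have vU: "vec u = x'" by (rule ext) (rule vu)
        have e1: "vm s (vec u) Q k = vm s x Q k + vm s (\<lambda>l. x' l - x l) Q k"
          unfolding vU vm_diff by simp
        have e2: "vm s x Q k = \<rho> k" using xQ[OF ks] True by (simp add: y_def)
        have e: "vm s (vec u) Q k = \<rho> k + vm s (\<lambda>l. x' l - x l) Q k" using e1 e2 by simp
        have "M dvd vm s (\<lambda>l. x' l - x l) Q k"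
          unfolding vm_def
        proof (rule dvd_sum)
          fix l assume "l \<in> {..<s}"
          then have "M dvd x' l - x l" by (intro Mdvd) simp
          then show "M dvd (x' l - x l) * Q l k" by (rule dvd_mult2)
        qed
        then have "\<delta> k dvd vm s (\<lambda>l. x' l - x l) Q k" using \<delta>_dvd_M[OF True] by (rule dvd_trans[rotated])
        then obtain t where t: "vm s (\<lambda>l. x' l - x l) Q k = \<delta> k * t" by (rule dvdE)
        have r: "\<rho> k \<in> {0..<\<delta> k}" using \<rho> True by (auto simp: PiE_iff)
        have "\<kappa> u k = vm s (vec u) Q k mod \<delta> k" using True by (simp add: \<kappa>_def)
        also have "\<dots> = (\<rho> k + \<delta> k * t) mod \<delta> k" by (simp only: e t)
        also have "\<dots> = \<rho> k mod \<delta> k" by (rule mod_mult_self2)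
        also have "\<dots> = \<rho> k" using r by (simp add: mod_pos_pos_trivial)
        finally show ?thesis .
      next
        case False
        have "\<rho> k = undefined" by (rule PiE_arb[OF \<rho>]) (use False in simp)
        moreover have "\<kappa> u k = undefined" unfolding \<kappa>_def using False by simp
        ultimately show ?thesis by simp
      qed
    qed
    then show "\<rho> \<in> \<kappa> ` Md s d" using uM by blast
  qed
qed

lemma card_image: "card (\<Pi>\<^sub>E k\<in>{..<s - 1}. {0..<\<delta> k}) = nat M"
proof -
  have "card (\<Pi>\<^sub>E k\<in>{..<s - 1}. {0..<\<delta> k}) = (\<Prod>k<s - 1. nat (\<delta> k))"
    by (simp add: card_PiE)
  also have "\<dots> = nat M"
  proof -
    have "int (\<Prod>k<s - 1. nat (\<delta> k)) = (\<Prod>k<s - 1. \<delta> k)"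
      unfolding of_nat_prod by (rule prod.cong) (use \<delta>_pos in \<open>auto simp: order.strict_implies_order\<close>)
    then show ?thesis unfolding M_def by linarith
  qed
  finally show ?thesis .
qed

lemma inv_prod: "invariant_factor_prod m s D = M"
proof -
  have "{i. i < min m s \<and> D i i > 0} = {..<s - 1}"
  proof (intro set_eqI iffI)
    fix i assume "i \<in> {i. i < min m s \<and> D i i > 0}"
    then have "i < s" "i < m" "\<delta> i > 0" by (auto simp: \<delta>_def)
    then show "i \<in> {..<s - 1}" using \<delta>_last by (cases "i = s - 1") auto
  next
    fix i assume "i \<in> {..<s - 1}"
    then have "\<delta> i > 0" "i < s" using \<delta>_pos by auto
    then show "i \<in> {i. i < min m s \<and> D i i > 0}" by (auto simp: \<delta>_def split: if_splits)
  qed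
  then show ?thesis
    unfolding invariant_factor_prod_def M_def
    by (intro prod.cong) (use \<delta>_pos in \<open>auto simp: \<delta>_def split: if_splits\<close>)
qed

end


theorem corollary3p14:
  fixes s m :: nat and A D :: "nat \<Rightarrow> nat \<Rightarrow> int"
  assumes "s \<ge> 2"
    and "homogeneous_lattice s (row_lattice m s A)"
    and "lattice_rank (row_lattice m s A) = s - 1"
    and "smith_nf m s A D"
  shows "deg_quot s (lattice_ideal s (row_lattice m s A) :: 'k::field mpoly set)
           = of_int (invariant_factor_prod m s D)"
proof -
  from assms(4) obtain P Q where PQ: "unimodular m P" "unimodular s Q"
      "\<forall>i<m. \<forall>j<s. D i j = mat_mul s (mat_mul m P A) Q i j"
    and Dd: "\<forall>i<m. \<forall>j<s. i \<noteq> j \<longrightarrow> D i j = 0" "\<forall>i<min m s. D i i \<ge> 0"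
      "\<forall>i. i + 1 < min m s \<longrightarrow> D i i dvd D (i + 1) (i + 1)"
    unfolding smith_nf_def by blast
  from PQ(1) obtain Pi where Pi: "\<forall>i<m. \<forall>j<m. mat_mul m P Pi i j = (if i = j then 1 else 0) \<and>
      mat_mul m Pi P i j = (if i = j then 1 else 0)" unfolding unimodular_def by blast
  from PQ(2) obtain Qi where Qi: "\<forall>i<s. \<forall>j<s. mat_mul s Q Qi i j = (if i = j then 1 else 0) \<and>
      mat_mul s Qi Q i j = (if i = j then 1 else 0)" unfolding unimodular_def by blast
  interpret S: snf_setup s m A D P Pi Q Qi
    by unfold_locales (use assms(1-3) PQ(3) Dd Pi Qi in \<open>simp_all\<close>)
  let ?L = "row_lattice m s A"
  let ?I = "lattice_ideal s ?L :: 'k mpoly set"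
  define N where "N = nat S.M"
  have hom': "\<forall>a\<in>?L. (\<Sum>j<s. a j) = 0" using S.homL by blast
  have L0': "\<forall>a\<in>?L. \<forall>j. \<not> j < s \<longrightarrow> a j = 0" using S.L0 by blast
  have H: "hilbert_fun s ?I d = N" if d: "d \<ge> nat (int (s - 1) * S.M)" for d
  proof -
    have d': "int d \<ge> int (s - 1) * S.M" using d by linarith
    have kap: "\<forall>u\<in>Md s d. \<forall>v\<in>Md s d. ((\<lambda>j. vec u j - vec v j) \<in> ?L \<longleftrightarrow> S.\<kappa> u = S.\<kappa> v)"
      using S.kap_iff by blast
    have "hilbert_fun s ?I d = card (S.\<kappa> ` Md s d)"
      by (rule hilbert_fun_classes[OF hom' L0' kap])
    also have "\<dots> = N" unfolding S.kappa_image[OF d'] S.card_image N_def ..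
    finally show ?thesis .
  qed
  have ev: "eventually (\<lambda>d. of_nat (hilbert_fun s ?I d) = poly [:of_nat N:] (of_nat d :: rat)) sequentially"
    unfolding eventually_sequentially using H by auto
  have uniq: "h = [:of_nat N:]"
    if h: "eventually (\<lambda>d. of_nat (hilbert_fun s ?I d) = poly h (of_nat d :: rat)) sequentially" for h
  proof (rule ccontr)
    assume ne: "h \<noteq> [:of_nat N:]"
    from eventually_conj[OF h ev] obtain N0 where
      N0: "\<forall>d\<ge>N0. of_nat (hilbert_fun s ?I d) = poly h (of_nat d :: rat) \<and>
         of_nat (hilbert_fun s ?I d) = poly [:of_nat N:] (of_nat d :: rat)"
      unfolding eventually_sequentially by blast
    have "of_nat ` {N0..} \<subseteq> {x. poly (h - [:of_nat N:]) x = (0::rat)}"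
      using N0 by auto
    moreover have "finite {x. poly (h - [:of_nat N:]) x = (0::rat)}"
      by (rule poly_roots_finite) (use ne in simp)
    ultimately have "finite (of_nat ` {N0..} :: rat set)" by (rule finite_subset)
    then have "finite {N0..}" by (rule finite_imageD) (simp add: inj_on_def)
    then show False using infinite_Ici[of N0] by simp
  qed
  have hp: "hilbert_poly s ?I = [:of_nat N:]"
    unfolding hilbert_poly_def
  proof (rule the_equality)
    show "eventually (\<lambda>d. of_nat (hilbert_fun s ?I d) = poly [:of_nat N:] (of_nat d :: rat)) sequentially"
      by (rule ev)
  qed (rule uniq)
  have Npos: "N > 0" using S.M_pos by (simp add: N_def)
  have "deg_quot s ?I = of_nat N"
    unfolding deg_quot_def Let_def hp using Npos by simp
  also have "\<dots> = of_int S.M" unfolding N_def using S.M_pos by simp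
  also have "\<dots> = of_int (invariant_factor_prod m s D)" by (simp add: S.inv_prod)
  finally show ?thesis .
qed


end
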